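(* Let $G$ be a Garside group. Then the center $Z(G)$ is cyclic if and only if any two Garside elements of $G$ are commensurable. Here "Garside elements of $G$" means elements $\Delta_1,\Delta_2$ arising as Garside elements of (possibly different) Garside structures $(G,G_1^+,\Delta_1)$ and $(G,G_2^+,\Delta_2)$ on the same group $G$.
   Context: An atomic monoid is a monoid $M$ generated by its atoms (elements $a\ne1$ such that $a=bc$ implies $b=1$ or $c=1$) in which, for each $a\in M$, the supremum $\|a\|$ of lengths of expressions of $a$ as a product of atoms is finite. On $M$ define $a\le_L b$ iff $ac=b$ for some $c\in M$, and $a\le_R b$ iff $ca=b$ for some $c\in M$. A Garside monoid is an atomic monoid $M$ that is left and right cancellative, such that $(M,\le_L)$ and $(M,\le_R)$ are lattices, and containing an element $\Delta$ (a Garside element) such that (a) for each $a\in M$, $a\le_L\Delta$ iff $a\le_R\Delta$, and (b) the set $\{a\in M: a\le_L\Delta\}$ is finite and generates $M$. A Garside group is the group of fractions $G$ of a Garside monoid $M$; $M$ is identified with its image $G^+\subset G$ (the positive monoid), and the triple $(G,G^+,\Delta)$ is called a Garside structure on $G$. A group may admit several Garside structures. In any Garside structure some positive power of $\Delta$ is central. Two elements $g,h$ of a group are commensurable if $g^k$ and $h^\ell$ are conjugate for some nonzero integers $k,\ell$. *)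

theory Defs
  imports "HOL-Algebra.Algebra"
begin

definition group_center :: "('g, 'b) monoid_scheme \<Rightarrow> 'g set" where
  "group_center G = {z \<in> carrier G. \<forall>g \<in> carrier G. z \<otimes>\<^bsub>G\<^esub> g = g \<otimes>\<^bsub>G\<^esub> z}"

definition listprod :: "('g, 'b) monoid_scheme \<Rightarrow> 'g list \<Rightarrow> 'g" where
  "listprod G xs = foldr (\<lambda>x y. x \<otimes>\<^bsub>G\<^esub> y) xs \<one>\<^bsub>G\<^esub>"

definition monoid_span :: "('g, 'b) monoid_scheme \<Rightarrow> 'g set \<Rightarrow> 'g set" where
  "monoid_span G S = {listprod G xs | xs. set xs \<subseteq> S}"

definition leL :: "('g, 'b) monoid_scheme \<Rightarrow> 'g set \<Rightarrow> 'g \<Rightarrow> 'g \<Rightarrow> bool" where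
  "leL G P a b \<longleftrightarrow> (\<exists>c \<in> P. a \<otimes>\<^bsub>G\<^esub> c = b)"

definition leR :: "('g, 'b) monoid_scheme \<Rightarrow> 'g set \<Rightarrow> 'g \<Rightarrow> 'g \<Rightarrow> bool" where
  "leR G P a b \<longleftrightarrow> (\<exists>c \<in> P. c \<otimes>\<^bsub>G\<^esub> a = b)"

definition is_lattice_on :: "'g set \<Rightarrow> ('g \<Rightarrow> 'g \<Rightarrow> bool) \<Rightarrow> bool" where
  "is_lattice_on P rel \<longleftrightarrow>
     (\<forall>a \<in> P. rel a a) \<and>
     (\<forall>a \<in> P. \<forall>b \<in> P. rel a b \<and> rel b a \<longrightarrow> a = b) \<and>
     (\<forall>a \<in> P. \<forall>b \<in> P. \<forall>c \<in> P. rel a b \<and> rel b c \<longrightarrow> rel a c) \<and>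
     (\<forall>a \<in> P. \<forall>b \<in> P.
        (\<exists>s \<in> P. rel a s \<and> rel b s \<and> (\<forall>u \<in> P. rel a u \<and> rel b u \<longrightarrow> rel s u)) \<and>
        (\<exists>i \<in> P. rel i a \<and> rel i b \<and> (\<forall>l \<in> P. rel l a \<and> rel l b \<longrightarrow> rel l i)))"

definition atoms :: "('g, 'b) monoid_scheme \<Rightarrow> 'g set \<Rightarrow> 'g set" where
  "atoms G P = {a \<in> P. a \<noteq> \<one>\<^bsub>G\<^esub> \<and>
     (\<forall>b \<in> P. \<forall>c \<in> P. a = b \<otimes>\<^bsub>G\<^esub> c \<longrightarrow> b = \<one>\<^bsub>G\<^esub> \<or> c = \<one>\<^bsub>G\<^esub>)}"

definition atomic_monoid :: "('g, 'b) monoid_scheme \<Rightarrow> 'g set \<Rightarrow> bool" where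
  "atomic_monoid G P \<longleftrightarrow>
     P = monoid_span G (atoms G P) \<and>
     (\<forall>a \<in> P. \<exists>N::nat. \<forall>xs. set xs \<subseteq> atoms G P \<and> listprod G xs = a \<longrightarrow> length xs \<le> N)"

text \<open>A Garside structure (G, P, Delta) on the group G: P is a submonoid of G generating G
  as a group (so G is the group of fractions of P), P is an atomic Garside monoid
  (cancellativity is automatic inside a group) with Garside element Delta.\<close>
definition garside_structure :: "('g, 'b) monoid_scheme \<Rightarrow> 'g set \<Rightarrow> 'g \<Rightarrow> bool" where
  "garside_structure G P \<Delta> \<longleftrightarrow>
     P \<subseteq> carrier G \<and> \<one>\<^bsub>G\<^esub> \<in> P \<and>
     (\<forall>a \<in> P. \<forall>b \<in> P. a \<otimes>\<^bsub>G\<^esub> b \<in> P) \<and>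
     generate G P = carrier G \<and>
     atomic_monoid G P \<and>
     is_lattice_on P (leL G P) \<and> is_lattice_on P (leR G P) \<and>
     \<Delta> \<in> P \<and>
     (\<forall>a \<in> P. leL G P a \<Delta> \<longleftrightarrow> leR G P a \<Delta>) \<and>
     finite {a \<in> P. leL G P a \<Delta>} \<and>
     monoid_span G {a \<in> P. leL G P a \<Delta>} = P"

definition garside_group :: "('g, 'b) monoid_scheme \<Rightarrow> bool" where
  "garside_group G \<longleftrightarrow> group G \<and> (\<exists>P \<Delta>. garside_structure G P \<Delta>)"

definition garside_element :: "('g, 'b) monoid_scheme \<Rightarrow> 'g \<Rightarrow> bool" where
  "garside_element G \<Delta> \<longleftrightarrow> (\<exists>P. garside_structure G P \<Delta>)"

definition commensurable :: "('g, 'b) monoid_scheme \<Rightarrow> 'g \<Rightarrow> 'g \<Rightarrow> bool" where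
  "commensurable G g h \<longleftrightarrow>
     (\<exists>(k::int) (l::int). k \<noteq> 0 \<and> l \<noteq> 0 \<and>
        (\<exists>x \<in> carrier G. inv\<^bsub>G\<^esub> x \<otimes>\<^bsub>G\<^esub> (g [^]\<^bsub>G\<^esub> k) \<otimes>\<^bsub>G\<^esub> x = h [^]\<^bsub>G\<^esub> l))"

end

theory Submission
  imports Defs
begin


lemma listprod_Nil[simp]: "listprod G [] = \<one>\<^bsub>G\<^esub>" by (simp add: listprod_def)
lemma listprod_Cons[simp]: "listprod G (x#xs) = x \<otimes>\<^bsub>G\<^esub> listprod G xs" by (simp add: listprod_def)

lemma (in monoid) listprod_closed: "set xs \<subseteq> carrier G \<Longrightarrow> listprod G xs \<in> carrier G"
  by (induction xs) auto

lemma (in monoid) listprod_append: "set xs \<subseteq> carrier G \<Longrightarrow> set ys \<subseteq> carrier G \<Longrightarrow>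
   listprod G (xs @ ys) = listprod G xs \<otimes> listprod G ys"
  by (induction xs) (auto simp: m_assoc listprod_closed)

lemma monoid_span_mono: "A \<subseteq> B \<Longrightarrow> monoid_span G A \<subseteq> monoid_span G B"
  unfolding monoid_span_def by blast

lemma centerD: "z \<in> group_center G \<Longrightarrow> g \<in> carrier G \<Longrightarrow> z \<otimes>\<^bsub>G\<^esub> g = g \<otimes>\<^bsub>G\<^esub> z"
  by (simp add: group_center_def)
lemma centerC: "z \<in> group_center G \<Longrightarrow> z \<in> carrier G"
  by (simp add: group_center_def)
lemma centerI: "z \<in> carrier G \<Longrightarrow> (\<And>g. g \<in> carrier G \<Longrightarrow> z \<otimes>\<^bsub>G\<^esub> g = g \<otimes>\<^bsub>G\<^esub> z) \<Longrightarrow> z \<in> group_center G"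
  by (simp add: group_center_def)

lemma (in group) inv_cancel_l [simp]: "x \<in> carrier G \<Longrightarrow> y \<in> carrier G \<Longrightarrow> inv x \<otimes> (x \<otimes> y) = y"
  by (simp add: m_assoc[symmetric])
lemma (in group) inv_cancel_r [simp]: "x \<in> carrier G \<Longrightarrow> y \<in> carrier G \<Longrightarrow> x \<otimes> (inv x \<otimes> y) = y"
  by (simp add: m_assoc[symmetric])

lemma (in group) center_subgroup: "subgroup (group_center G) G"
proof (rule subgroupI)
  show "group_center G \<subseteq> carrier G" by (auto simp: group_center_def)
  have "\<one> \<in> group_center G" by (auto simp: group_center_def)
  then show "group_center G \<noteq> {}" by blast
  fix a b assume a: "a \<in> group_center G" and b: "b \<in> group_center G"
  have ac: "a \<in> carrier G" and bc: "b \<in> carrier G" using centerC[OF a] centerC[OF b] by auto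
  show "inv a \<in> group_center G"
  proof (rule centerI)
    show "inv a \<in> carrier G" using ac by simp
    fix g assume g: "g \<in> carrier G"
    have "inv a \<otimes> g = inv a \<otimes> (g \<otimes> a) \<otimes> inv a" using ac g by (simp add: m_assoc)
    also have "\<dots> = inv a \<otimes> (a \<otimes> g) \<otimes> inv a" using centerD[OF a g] by simp
    also have "\<dots> = g \<otimes> inv a" using ac g by (simp add: m_assoc[symmetric])
    finally show "inv a \<otimes> g = g \<otimes> inv a" .
  qed
  show "a \<otimes> b \<in> group_center G"
  proof (rule centerI)
    show "a \<otimes> b \<in> carrier G" using ac bc by simp
    fix g assume g: "g \<in> carrier G"
    have "a \<otimes> b \<otimes> g = a \<otimes> (b \<otimes> g)" using ac bc g by (simp add: m_assoc)
    also have "\<dots> = a \<otimes> (g \<otimes> b)" using centerD[OF b g] by simp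
    also have "\<dots> = (a \<otimes> g) \<otimes> b" using ac bc g by (simp add: m_assoc)
    also have "\<dots> = (g \<otimes> a) \<otimes> b" using centerD[OF a g] by simp
    also have "\<dots> = g \<otimes> (a \<otimes> b)" using ac bc g by (simp add: m_assoc)
    finally show "a \<otimes> b \<otimes> g = g \<otimes> (a \<otimes> b)" .
  qed
qed

lemma (in group) cyclic_center_iff:
  shows "cyclic_group (G\<lparr>carrier := group_center G\<rparr>) \<longleftrightarrow>
     (\<exists>x\<in>group_center G. group_center G = range (\<lambda>n::int. x [^]\<^bsub>G\<^esub> n))"
proof -
  have sg: "subgroup (group_center G) G" by (rule center_subgroup)
  have gH: "group (G\<lparr>carrier := group_center G\<rparr>)" by (rule subgroup.subgroup_is_group[OF sg is_group])
  show ?thesis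
    unfolding group.cyclic_group[OF gH]
    using int_pow_consistent[OF sg] by simp
qed



locale gstr = group G for G (structure) +
  fixes P :: "'a set" and D :: 'a
  assumes gs: "garside_structure G P D"
begin

abbreviation "lel \<equiv> leL G P"
abbreviation "S \<equiv> {a\<in>P. leL G P a D}"

lemma PG: "P \<subseteq> carrier G" using gs by (simp add: garside_structure_def)
lemma PGx: "x \<in> P \<Longrightarrow> x \<in> carrier G" using PG by auto
lemma oneP[simp]: "\<one> \<in> P" using gs by (simp add: garside_structure_def)
lemma mulP[intro]: "a \<in> P \<Longrightarrow> b \<in> P \<Longrightarrow> a \<otimes> b \<in> P" using gs by (simp add: garside_structure_def)
lemma genP: "generate G P = carrier G" using gs by (simp add: garside_structure_def)
lemma atomicP: "atomic_monoid G P" using gs by (simp add: garside_structure_def)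
lemma latL: "is_lattice_on P lel" using gs by (simp add: garside_structure_def)
lemma DP: "D \<in> P" using gs by (simp add: garside_structure_def)
lemma LR: "a \<in> P \<Longrightarrow> lel a D \<longleftrightarrow> leR G P a D" using gs by (simp add: garside_structure_def)
lemma finS: "finite S" using gs by (simp add: garside_structure_def)
lemma spanS: "monoid_span G S = P" using gs by (simp add: garside_structure_def)

lemma powP: "x \<in> P \<Longrightarrow> x [^] (n::nat) \<in> P"
  by (induction n) auto

lemma listprod_P: "set xs \<subseteq> P \<Longrightarrow> listprod G xs \<in> P"
  by (induction xs) auto

lemma span_sub: "A \<subseteq> P \<Longrightarrow> monoid_span G A \<subseteq> P"
  unfolding monoid_span_def using listprod_P by blast

lemma lel_refl: "a \<in> P \<Longrightarrow> lel a a"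
  using latL unfolding is_lattice_on_def by blast
lemma lel_antisym: "a \<in> P \<Longrightarrow> b \<in> P \<Longrightarrow> lel a b \<Longrightarrow> lel b a \<Longrightarrow> a = b"
  using latL unfolding is_lattice_on_def by blast
lemma lel_trans: "a \<in> P \<Longrightarrow> b \<in> P \<Longrightarrow> c \<in> P \<Longrightarrow> lel a b \<Longrightarrow> lel b c \<Longrightarrow> lel a c"
  using latL unfolding is_lattice_on_def by blast
lemma lel_join: "a \<in> P \<Longrightarrow> b \<in> P \<Longrightarrow>
   \<exists>s \<in> P. lel a s \<and> lel b s \<and> (\<forall>u \<in> P. lel a u \<and> lel b u \<longrightarrow> lel s u)"
  using latL unfolding is_lattice_on_def by blast
lemma lel_meet: "a \<in> P \<Longrightarrow> b \<in> P \<Longrightarrow>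
   \<exists>i \<in> P. lel i a \<and> lel i b \<and> (\<forall>l \<in> P. lel l a \<and> lel l b \<longrightarrow> lel l i)"
  using latL unfolding is_lattice_on_def by blast

lemma lelI: "c \<in> P \<Longrightarrow> a \<otimes> c = b \<Longrightarrow> lel a b" by (auto simp: leL_def)

lemma lel_mult: "p \<in> P \<Longrightarrow> a \<in> P \<Longrightarrow> lel a b \<Longrightarrow> lel (p \<otimes> a) (p \<otimes> b)"
  unfolding leL_def using PGx by (auto simp: m_assoc)

lemma lel_cancel: "p \<in> carrier G \<Longrightarrow> a \<in> carrier G \<Longrightarrow> b \<in> carrier G \<Longrightarrow> lel (p \<otimes> a) (p \<otimes> b) \<Longrightarrow> lel a b"
  unfolding leL_def using PGx by (auto simp: m_assoc)

lemma lel_right: "a \<in> P \<Longrightarrow> c \<in> P \<Longrightarrow> lel a (a \<otimes> c)" by (auto simp: leL_def)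

lemma unitP: assumes "a \<in> P" "b \<in> P" "a \<otimes> b = \<one>" shows "a = \<one>"
proof -
  have "lel a \<one>" using assms by (auto simp: leL_def)
  moreover have "lel \<one> a" using assms PGx by (auto simp: leL_def intro!: bexI[of _ a])
  ultimately show ?thesis using lel_antisym assms by auto
qed

lemma unitP2: assumes "a \<in> P" "b \<in> P" "a \<otimes> b = \<one>" shows "b = \<one>"
  using unitP[OF assms] assms PGx by auto

lemma atom_in_list: "a \<in> atoms G P \<Longrightarrow> set xs \<subseteq> P \<Longrightarrow> listprod G xs = a \<Longrightarrow> a \<in> set xs"
proof (induction xs)
  case Nil then show ?case by (auto simp: atoms_def)
next
  case (Cons x xs)
  have "x \<in> P" "set xs \<subseteq> P" using Cons.prems(2) by auto
  then have "listprod G xs \<in> P" using listprod_P by auto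
  have "a = x \<otimes> listprod G xs" using Cons.prems(3) by simp
  then have "x = \<one> \<or> listprod G xs = \<one>" using Cons.prems(1) \<open>x \<in> P\<close> \<open>listprod G xs \<in> P\<close> unfolding atoms_def by blast
  then show ?case
  proof
    assume "x = \<one>"
    have "a = x \<otimes> listprod G xs" using Cons.prems(3) by simp
    also have "\<dots> = listprod G xs" using \<open>x = \<one>\<close> PGx[OF \<open>listprod G xs \<in> P\<close>] by simp
    finally have "listprod G xs = a" by simp
    then show ?thesis using Cons by auto
  next
    assume "listprod G xs = \<one>"
    have "a = x \<otimes> listprod G xs" using Cons.prems(3) by simp
    also have "\<dots> = x" using \<open>listprod G xs = \<one>\<close> PGx[OF \<open>x \<in> P\<close>] by simp
    finally have "x = a" by simp
    then show ?thesis by simp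
  qed
qed

lemma atoms_sub: "atoms G P \<subseteq> S"
proof
  fix a assume a: "a \<in> atoms G P"
  then have "a \<in> P" by (auto simp: atoms_def)
  then have "a \<in> monoid_span G S" using spanS by simp
  then obtain xs where xs: "set xs \<subseteq> S" "listprod G xs = a" by (auto simp: monoid_span_def)
  then have "a \<in> set xs" using atom_in_list[OF a, of xs] by auto
  then show "a \<in> S" using xs by auto
qed

lemma finite_atoms: "finite (atoms G P)" using atoms_sub finS finite_subset by blast

lemma atoms_P: "atoms G P \<subseteq> P" by (auto simp: atoms_def)

lemma atomic_eq: "P = monoid_span G (atoms G P)"
  using atomicP unfolding atomic_monoid_def by (rule conjunct1)

lemma atomic_bd: "\<forall>a \<in> P. \<exists>N::nat. \<forall>xs. set xs \<subseteq> atoms G P \<and> listprod G xs = a \<longrightarrow> length xs \<le> N"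
  using atomicP unfolding atomic_monoid_def by (rule conjunct2)

lemma atom_word: assumes x: "x \<in> P" shows "\<exists>xs. set xs \<subseteq> atoms G P \<and> listprod G xs = x"
proof -
  have "x \<in> monoid_span G (atoms G P)" by (subst atomic_eq[symmetric]) (rule x)
  then show ?thesis unfolding monoid_span_def by blast
qed

lemma fin_div: assumes x: "x \<in> P" shows "finite {a\<in>P. lel a x}"
proof -
  obtain N where N: "\<And>xs. set xs \<subseteq> atoms G P \<Longrightarrow> listprod G xs = x \<Longrightarrow> length xs \<le> N"
    using bspec[OF atomic_bd x] by blast
  have "{a\<in>P. lel a x} \<subseteq> listprod G ` {xs. set xs \<subseteq> atoms G P \<and> length xs \<le> N}"
  proof
    fix a assume "a \<in> {a\<in>P. lel a x}"
    then obtain c where a: "a \<in> P" and c: "c \<in> P" "a \<otimes> c = x" by (auto simp: leL_def)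
    obtain xs where xs: "set xs \<subseteq> atoms G P" "listprod G xs = a" using atom_word[OF a] by blast
    obtain ys where ys: "set ys \<subseteq> atoms G P" "listprod G ys = c" using atom_word[OF c(1)] by blast
    have ac: "set xs \<subseteq> carrier G" "set ys \<subseteq> carrier G" using xs ys atoms_P PG by auto
    have "listprod G (xs @ ys) = x" using listprod_append[OF ac] xs ys c by simp
    moreover have "set (xs @ ys) \<subseteq> atoms G P" using xs ys by auto
    ultimately have "length (xs @ ys) \<le> N" by (rule N[rotated])
    then show "a \<in> listprod G ` {xs. set xs \<subseteq> atoms G P \<and> length xs \<le> N}" using xs by force
  qed
  moreover have "finite {xs. set xs \<subseteq> atoms G P \<and> length xs \<le> N}"
    by (rule finite_lists_length_le[OF finite_atoms])
  ultimately show ?thesis using finite_subset by blast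
qed

end


lemma (in group) center_nat_pow: "z \<in> group_center G \<Longrightarrow> z [^] (n::nat) \<in> group_center G"
  using subgroup_int_pow_closed[OF center_subgroup, of z "int n"] by (simp add: int_pow_int)
lemma (in group) center_int_pow: "z \<in> group_center G \<Longrightarrow> z [^] (n::int) \<in> group_center G"
  using subgroup_int_pow_closed[OF center_subgroup] by simp
lemma (in group) center_inv: "z \<in> group_center G \<Longrightarrow> inv z \<in> group_center G"
  using subgroup.m_inv_closed[OF center_subgroup] by simp
lemma (in group) center_mult: "z \<in> group_center G \<Longrightarrow> w \<in> group_center G \<Longrightarrow> z \<otimes> w \<in> group_center G"
  using subgroup.m_closed[OF center_subgroup] by simp

lemma (in group) centralizer_subgroup: assumes z: "z \<in> carrier G"
  shows "subgroup {g\<in>carrier G. z \<otimes> g = g \<otimes> z} G"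
proof (rule subgroupI)
  show "{g\<in>carrier G. z \<otimes> g = g \<otimes> z} \<subseteq> carrier G" by auto
  show "{g\<in>carrier G. z \<otimes> g = g \<otimes> z} \<noteq> {}" using z by (auto intro!: exI[of _ z])
  fix a b assume a: "a \<in> {g\<in>carrier G. z \<otimes> g = g \<otimes> z}" and b: "b \<in> {g\<in>carrier G. z \<otimes> g = g \<otimes> z}"
  have ac: "a \<in> carrier G" "z \<otimes> a = a \<otimes> z" using a by auto
  have bc: "b \<in> carrier G" "z \<otimes> b = b \<otimes> z" using b by auto
  have "z \<otimes> inv a = inv a \<otimes> (a \<otimes> z) \<otimes> inv a" using ac(1) z by (simp add: m_assoc)
  also have "\<dots> = inv a \<otimes> (z \<otimes> a) \<otimes> inv a" using ac by simp
  also have "\<dots> = inv a \<otimes> z" using ac(1) z by (simp add: m_assoc)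
  finally show "inv a \<in> {g\<in>carrier G. z \<otimes> g = g \<otimes> z}" using ac by simp
  have "z \<otimes> (a \<otimes> b) = (z \<otimes> a) \<otimes> b" using ac(1) bc(1) z by (simp add: m_assoc)
  also have "\<dots> = (a \<otimes> z) \<otimes> b" using ac by simp
  also have "\<dots> = a \<otimes> (z \<otimes> b)" using ac(1) bc(1) z by (simp add: m_assoc)
  also have "\<dots> = a \<otimes> (b \<otimes> z)" using bc by simp
  also have "\<dots> = (a \<otimes> b) \<otimes> z" using ac(1) bc(1) z by (simp add: m_assoc)
  finally show "a \<otimes> b \<in> {g\<in>carrier G. z \<otimes> g = g \<otimes> z}" using ac bc by simp
qed

lemma (in group) conj_cancel: "y \<in> carrier G \<Longrightarrow> u \<in> carrier G \<Longrightarrow> v \<in> carrier G \<Longrightarrow>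
  inv y \<otimes> u \<otimes> y = inv y \<otimes> v \<otimes> y \<Longrightarrow> u = v"
  by (metis inv_closed m_closed r_cancel l_cancel)

context gstr begin

lemma conj_S: assumes a: "a \<in> S" shows "inv D \<otimes> a \<otimes> D \<in> S"
proof -
  obtain b where b: "b \<in> P" "a \<otimes> b = D" using a by (auto simp: leL_def)
  have "leR G P b D" using b a by (auto simp: leR_def)
  then have "lel b D" using LR b by simp
  then obtain c where c: "c \<in> P" "b \<otimes> c = D" by (auto simp: leL_def)
  have ac: "a \<in> carrier G" "b \<in> carrier G" "c \<in> carrier G" "D \<in> carrier G" using a b c DP PGx by auto
  have "inv D \<otimes> a \<otimes> D = inv (a \<otimes> b) \<otimes> a \<otimes> (b \<otimes> c)" using b c by simp
  also have "\<dots> = c" using ac by (simp add: inv_mult_group m_assoc)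
  finally have e: "inv D \<otimes> a \<otimes> D = c" .
  have "leR G P c D" using b c by (auto simp: leR_def)
  then have "lel c D" using LR c by simp
  then show ?thesis using e c by simp
qed

lemma conj_pow_S: assumes a: "a \<in> S" shows "inv (D [^] (k::nat)) \<otimes> a \<otimes> D [^] k \<in> S"
proof (induction k)
  case 0 then show ?case using a PGx by simp
next
  case (Suc k)
  have ac: "a \<in> carrier G" "D \<in> carrier G" using a DP PGx by auto
  have "inv (D [^] Suc k) \<otimes> a \<otimes> D [^] Suc k = inv D \<otimes> (inv (D [^] k) \<otimes> a \<otimes> D [^] k) \<otimes> D"
    using ac by (simp add: inv_mult_group m_assoc)
  then show ?case using conj_S[OF Suc.IH] by simp
qed

lemma D_carrier: "D \<in> carrier G" using DP PGx by auto

lemma exists_central_pow: "\<exists>m>0. D [^] (m::nat) \<in> group_center G"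
proof -
  define F where "F = (\<lambda>k::nat. restrict (\<lambda>a. inv (D [^] k) \<otimes> a \<otimes> D [^] k) S)"
  have Fk: "F k \<in> (\<Pi>\<^sub>E a \<in> S. S)" for k unfolding F_def restrict_PiE_iff by (intro ballI conj_pow_S)
  have "range F \<subseteq> (\<Pi>\<^sub>E a \<in> S. S)" using Fk by blast
  moreover have "finite (\<Pi>\<^sub>E a \<in> S. S)" using finS by (intro finite_PiE) auto
  ultimately have "finite (range F)" using finite_subset by blast
  then have "\<not> inj F"
  proof (intro notI)
    assume "finite (range F)" "inj F"
    then have "finite (UNIV :: nat set)" by (rule finite_imageD)
    then show False by simp
  qed
  then obtain i j where ij: "F i = F j" "i \<noteq> j" unfolding inj_def by blast
  obtain i j where ij: "F i = F j" "i < j"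
  proof (cases "i < j")
    case True then show ?thesis using that ij by blast
  next
    case False then show ?thesis using that[of j i] ij by auto
  qed
  define m where "m = j - i"
  have m: "m > 0" "j = m + i" using ij m_def by auto
  have comm: "D [^] m \<otimes> a = a \<otimes> D [^] m" if a: "a \<in> S" for a
  proof -
    have ac: "a \<in> carrier G" using a PGx by auto
    have "inv (D [^] i) \<otimes> a \<otimes> D [^] i = inv (D [^] j) \<otimes> a \<otimes> D [^] j"
      using fun_cong[OF ij(1), of a] a unfolding F_def by simp
    also have "\<dots> = inv (D [^] i) \<otimes> (inv (D [^] m) \<otimes> a \<otimes> D [^] m) \<otimes> D [^] i"
      using D_carrier ac unfolding m(2) nat_pow_mult[OF D_carrier, symmetric]
      by (simp add: inv_mult_group m_assoc)
    finally have "a = inv (D [^] m) \<otimes> a \<otimes> D [^] m"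
      using conj_cancel D_carrier ac by (metis inv_closed m_closed nat_pow_closed)
    then have "D [^] m \<otimes> a = D [^] m \<otimes> (inv (D [^] m) \<otimes> a \<otimes> D [^] m)" by simp
    also have "\<dots> = a \<otimes> D [^] m" using ac D_carrier by (simp add: m_assoc)
    finally show ?thesis .
  qed
  define C where "C = {g\<in>carrier G. D [^] m \<otimes> g = g \<otimes> D [^] m}"
  have sgC: "subgroup C G" unfolding C_def by (rule centralizer_subgroup) (simp add: D_carrier)
  have "set xs \<subseteq> S \<Longrightarrow> listprod G xs \<in> C" for xs
  proof (induction xs)
    case Nil then show ?case using subgroup.one_closed[OF sgC] by simp
  next
    case (Cons x xs)
    have "x \<in> C" using comm Cons.prems PGx unfolding C_def by auto
    then show ?case using Cons subgroup.m_closed[OF sgC] by simp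
  qed
  then have "monoid_span G S \<subseteq> C" unfolding monoid_span_def by blast
  then have "P \<subseteq> C" using spanS by simp
  then have "generate G P \<subseteq> C" using generate_subgroup_incl sgC by blast
  then have "carrier G \<subseteq> C" using genP by simp
  then have "D [^] m \<in> group_center G" unfolding C_def by (auto intro!: centerI simp: D_carrier)
  then show ?thesis using m by blast
qed

definition m0 where "m0 = (SOME m. m > 0 \<and> D [^] (m::nat) \<in> group_center G)"

lemma m0: "m0 > 0" "D [^] m0 \<in> group_center G"
  using someI_ex[OF exists_central_pow] unfolding m0_def by auto

abbreviation "dl \<equiv> D [^] m0"

lemma dl_center: "dl \<in> group_center G" by (rule m0(2))
lemma dl_carrier: "dl \<in> carrier G" using D_carrier by simp
lemma dl_P: "dl \<in> P" using powP DP by simp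
lemma dlpow_center: "dl [^] (n::nat) \<in> group_center G" using center_nat_pow dl_center by blast
lemma dlpow_P: "dl [^] (n::nat) \<in> P" using powP dl_P by blast
lemma dl_split: "dl = D \<otimes> D [^] (m0 - 1)"
  using nat_pow_Suc2[OF D_carrier, of "m0 - 1"] m0(1) by simp
lemma D_le_dl: "lel D dl" by (rule lelI[OF powP[OF DP] dl_split[symmetric]])

lemma simple_inv: assumes s: "s \<in> S" shows "inv s \<otimes> dl \<in> P"
proof -
  obtain t where t: "t \<in> P" "s \<otimes> t = D" using s by (auto simp: leL_def)
  have sc: "s \<in> carrier G" "t \<in> carrier G" using s t PGx by auto
  have "inv s \<otimes> dl = inv s \<otimes> (s \<otimes> t \<otimes> D [^] (m0 - 1))" using dl_split t by simp
  also have "\<dots> = t \<otimes> D [^] (m0 - 1)" using sc D_carrier by (simp add: m_assoc)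
  finally show ?thesis using t powP DP by auto
qed

lemma inv_pos: assumes p: "p \<in> P" shows "\<exists>k::nat. inv p \<otimes> dl [^] k \<in> P"
proof -
  have "p \<in> monoid_span G S" by (subst spanS) (rule p)
  then obtain xs where xs: "set xs \<subseteq> S" "listprod G xs = p"
    unfolding monoid_span_def by blast
  have "set xs \<subseteq> S \<Longrightarrow> \<exists>k::nat. inv (listprod G xs) \<otimes> dl [^] k \<in> P"
  proof (induction xs)
    case Nil then show ?case by (auto intro!: exI[of _ 0])
  next
    case (Cons x xs)
    then obtain k :: nat where k: "inv (listprod G xs) \<otimes> dl [^] k \<in> P" using Cons.IH Cons.prems by auto
    have xc: "x \<in> carrier G" "listprod G xs \<in> carrier G" using Cons.prems PG listprod_closed by auto
    have dc: "dl [^] k \<in> carrier G" using dl_carrier by simp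
    have "inv (listprod G (x # xs)) \<otimes> dl [^] Suc k = inv (listprod G xs) \<otimes> (inv x \<otimes> dl [^] k) \<otimes> dl"
      using xc dc dl_carrier by (simp add: inv_mult_group m_assoc)
    also have "\<dots> = inv (listprod G xs) \<otimes> (dl [^] k \<otimes> inv x) \<otimes> dl"
      using centerD[OF dlpow_center, of "inv x" k] xc by simp
    also have "\<dots> = (inv (listprod G xs) \<otimes> dl [^] k) \<otimes> (inv x \<otimes> dl)"
      using xc dc dl_carrier by (simp add: m_assoc)
    finally have "inv (listprod G (x # xs)) \<otimes> dl [^] Suc k \<in> P"
      using k simple_inv Cons.prems by auto
    then show ?case by blast
  qed
  then show ?thesis using xs by blast
qed

lemma rep: assumes g: "g \<in> carrier G" shows "\<exists>n::nat. g \<otimes> dl [^] n \<in> P"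
proof -
  define Xs where "Xs = {g\<in>carrier G. \<exists>n::nat. g \<otimes> dl [^] n \<in> P}"
  have sgX: "subgroup Xs G"
  proof (rule subgroupI)
    show "Xs \<subseteq> carrier G" unfolding Xs_def by auto
    show "Xs \<noteq> {}" unfolding Xs_def by (auto intro!: exI[of _ \<one>] exI[of _ 0])
  next
    fix a assume "a \<in> Xs"
    then obtain n :: nat where a: "a \<in> carrier G" "a \<otimes> dl [^] n \<in> P" unfolding Xs_def by auto
    obtain k :: nat where k: "inv (a \<otimes> dl [^] n) \<otimes> dl [^] k \<in> P" using inv_pos[OF a(2)] by blast
    have dc: "dl [^] n \<in> carrier G" "dl [^] k \<in> carrier G" using dl_carrier by auto
    have "inv a \<otimes> dl [^] k = dl [^] n \<otimes> (inv (a \<otimes> dl [^] n) \<otimes> dl [^] k)"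
      using a dc by (simp add: inv_mult_group m_assoc)
    also have "\<dots> \<in> P" using k dlpow_P by blast
    finally show "inv a \<in> Xs" using k a unfolding Xs_def by auto
  next
    fix a b assume "a \<in> Xs" "b \<in> Xs"
    then obtain n k :: nat where a: "a \<in> carrier G" "a \<otimes> dl [^] n \<in> P" and b: "b \<in> carrier G" "b \<otimes> dl [^] k \<in> P"
      unfolding Xs_def by auto
    have dc: "dl [^] n \<in> carrier G" "dl [^] k \<in> carrier G" using dl_carrier by auto
    have "a \<otimes> b \<otimes> dl [^] (n + k) = a \<otimes> (b \<otimes> dl [^] n) \<otimes> dl [^] k"
      using a b dc dl_carrier by (simp add: nat_pow_mult[symmetric] m_assoc)
    also have "\<dots> = a \<otimes> (dl [^] n \<otimes> b) \<otimes> dl [^] k"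
      using centerD[OF dlpow_center, of b n] b by simp
    also have "\<dots> = (a \<otimes> dl [^] n) \<otimes> (b \<otimes> dl [^] k)"
      using a b dc by (simp add: m_assoc)
    finally show "a \<otimes> b \<in> Xs" using a b unfolding Xs_def by (auto intro!: exI[of _ "n+k"])
  qed
  have "P \<subseteq> Xs" unfolding Xs_def using PGx by (auto intro!: exI[of _ 0])
  then have "carrier G \<subseteq> Xs" using generate_subgroup_incl[OF _ sgX] genP by blast
  then show ?thesis using g unfolding Xs_def by auto
qed

end


context gstr begin

lemma glb_ex: "finite Xs \<Longrightarrow> Xs \<noteq> {} \<Longrightarrow> Xs \<subseteq> P \<Longrightarrow>
  \<exists>a\<in>P. (\<forall>y\<in>Xs. lel a y) \<and> (\<forall>b\<in>P. (\<forall>y\<in>Xs. lel b y) \<longrightarrow> lel b a)"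
proof (induction Xs rule: finite_ne_induct)
  case (singleton x)
  then show ?case using lel_refl by auto
next
  case (insert x F)
  then obtain a where a: "a \<in> P" "\<forall>y\<in>F. lel a y" "\<forall>b\<in>P. (\<forall>y\<in>F. lel b y) \<longrightarrow> lel b a" by auto
  have xP: "x \<in> P" using insert by auto
  obtain i where i: "i \<in> P" "lel i x" "lel i a" "\<forall>l \<in> P. lel l x \<and> lel l a \<longrightarrow> lel l i"
    using lel_meet[OF xP a(1)] by blast
  have "\<forall>y\<in>insert x F. lel i y" using i a insert.prems lel_trans by blast
  moreover have "\<forall>b\<in>P. (\<forall>y\<in>insert x F. lel b y) \<longrightarrow> lel b i" using i a by auto
  ultimately show ?case using i by blast
qed

lemma rootP: assumes g: "g \<in> group_center G" and j: "j > 0" and gj: "g [^] (j::nat) \<in> P"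
  shows "g \<in> P"
proof -
  have gc: "g \<in> carrier G" using centerC[OF g] .
  obtain n :: nat where pn: "g \<otimes> dl [^] n \<in> P" using rep[OF gc] by blast
  define w where "w = dl [^] n"
  have w: "w \<in> group_center G" "w \<in> P" "w \<in> carrier G" unfolding w_def using dlpow_center dlpow_P dl_carrier by auto
  define p where "p = g \<otimes> w"
  have p: "p \<in> P" "p \<in> carrier G" using pn unfolding p_def w_def using gc w D_carrier by auto
  have pw: "p = w \<otimes> g" unfolding p_def using centerD[OF g w(3)] by simp
  define y where "y = (\<lambda>i::nat. g [^] i \<otimes> w [^] (j - 1))"
  have yc: "y i \<in> carrier G" for i unfolding y_def using gc w by auto
  have yP: "y i \<in> P" if "i < j" for i
  proof -
    have "y i = g [^] i \<otimes> (w [^] i \<otimes> w [^] (j - 1 - i))"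
      unfolding y_def using w(3) that by (simp add: nat_pow_mult)
    also have "\<dots> = (g [^] i \<otimes> w [^] i) \<otimes> w [^] (j - 1 - i)" using gc w by (simp add: m_assoc)
    also have "g [^] i \<otimes> w [^] i = p [^] i" unfolding p_def
      using pow_mult_distrib[of g w i] centerD[OF g w(3)] gc w(3) by simp
    finally have "y i = p [^] i \<otimes> w [^] (j - 1 - i)" .
    then show ?thesis using powP p w by auto
  qed
  define Y where "Y = y ` {..<j}"
  have "finite Y" unfolding Y_def by simp
  moreover have "Y \<noteq> {}" unfolding Y_def using j by (auto simp: lessThan_empty_iff)
  moreover have "Y \<subseteq> P" unfolding Y_def using yP by (simp add: image_subset_iff)
  ultimately have "\<exists>a\<in>P. (\<forall>u\<in>Y. lel a u) \<and> (\<forall>b\<in>P. (\<forall>u\<in>Y. lel b u) \<longrightarrow> lel b a)"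
    by (rule glb_ex)
  then obtain a where a: "a \<in> P" "\<forall>u\<in>Y. lel a u" "\<forall>b\<in>P. (\<forall>u\<in>Y. lel b u) \<longrightarrow> lel b a"
    by blast
  have ac: "a \<in> carrier G" using a PGx by auto
  have ay: "lel a (y i)" if "i < j" for i using a that unfolding Y_def by auto
  have wa: "w \<otimes> a \<in> P" using w a by auto
  have claim1: "lel (w \<otimes> a) (p \<otimes> y i)" if i: "i < j" for i
  proof -
    have e: "p \<otimes> y i = w \<otimes> (g [^] Suc i \<otimes> w [^] (j - 1))"
      unfolding pw y_def nat_pow_Suc2[OF gc] using gc w(3) by (simp add: m_assoc del: nat_pow_Suc)
    show ?thesis
    proof (cases "Suc i < j")
      case True
      have "p \<otimes> y i = w \<otimes> y (Suc i)" using e by (simp add: y_def)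
      then show ?thesis using lel_mult[OF w(2) a(1) ay[OF True]] by simp
    next
      case False
      then have ij: "Suc i = j" using i by simp
      have "g [^] Suc i \<otimes> w [^] (j - 1) = y 0 \<otimes> g [^] j"
        unfolding y_def ij using centerD[OF center_nat_pow[OF w(1)], of "g [^] j" "j - 1"] gc w(3) by simp
      then have e2: "p \<otimes> y i = w \<otimes> (y 0 \<otimes> g [^] j)" using e by simp
      have "lel a (y 0 \<otimes> g [^] j)"
        using lel_trans[OF a(1) yP[OF j] mulP[OF yP[OF j] gj] ay[OF j] lel_right[OF yP[OF j] gj]] .
      then show ?thesis using e2 lel_mult[OF w(2) a(1)] by simp
    qed
  qed
  obtain s where s: "s \<in> P" "lel (w \<otimes> a) s" "lel p s"
      "\<forall>u \<in> P. lel (w \<otimes> a) u \<and> lel p u \<longrightarrow> lel s u"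
    using lel_join[OF wa p(1)] by blast
  obtain f where f: "f \<in> P" "p \<otimes> f = s" using s(3) by (auto simp: leL_def)
  have fc: "f \<in> carrier G" using f PGx by auto
  have "lel f (y i)" if i: "i < j" for i
  proof -
    have "lel s (p \<otimes> y i)" using s(4) claim1[OF i] lel_right[OF p(1) yP[OF i]] mulP p yP[OF i] by blast
    then have "lel (p \<otimes> f) (p \<otimes> y i)" using f by simp
    then show ?thesis using lel_cancel p(2) fc yc by blast
  qed
  then have "lel f a" using a(3) f(1) unfolding Y_def by auto
  then have "lel s (p \<otimes> a)" using lel_mult[OF p(1) f(1)] f by simp
  then have "lel (w \<otimes> a) (p \<otimes> a)" using lel_trans[OF wa s(1) mulP[OF p(1) a(1)] s(2)] by simp
  then obtain q where q: "q \<in> P" "w \<otimes> a \<otimes> q = p \<otimes> a" by (auto simp: leL_def)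
  have qc: "q \<in> carrier G" using q PGx by auto
  have "w \<otimes> (a \<otimes> q) = w \<otimes> (a \<otimes> g)"
    using q(2) unfolding pw using centerD[OF g ac] ac qc gc w(3) by (simp add: m_assoc)
  then have "a \<otimes> q = a \<otimes> g" using l_cancel w(3) ac qc gc by (meson m_closed)
  then have "q = g" using l_cancel ac qc gc by blast
  then show ?thesis using q by simp
qed

end


context gstr begin

lemma garside_central: assumes x: "x \<in> P" "x \<in> group_center G" and Dx: "lel D x"
  shows "garside_structure G P x"
proof -
  have xc: "x \<in> carrier G" using x PGx by auto
  have lr: "lel a x \<longleftrightarrow> leR G P a x" if a: "a \<in> P" for a
  proof
    assume "lel a x"
    then obtain c where c: "c \<in> P" "a \<otimes> c = x" by (auto simp: leL_def)
    have ac: "a \<in> carrier G" "c \<in> carrier G" using a c PGx by auto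
    have "c \<otimes> a = inv a \<otimes> (a \<otimes> c) \<otimes> a" using ac by (simp add: m_assoc)
    also have "\<dots> = inv a \<otimes> (x \<otimes> a)" using c ac xc by (simp add: m_assoc)
    also have "\<dots> = x" using centerD[OF x(2) ac(1)] ac xc by simp
    finally show "leR G P a x" using c by (auto simp: leR_def)
  next
    assume "leR G P a x"
    then obtain c where c: "c \<in> P" "c \<otimes> a = x" by (auto simp: leR_def)
    have ac: "a \<in> carrier G" "c \<in> carrier G" using a c PGx by auto
    have "a \<otimes> c = a \<otimes> (c \<otimes> a) \<otimes> inv a" using ac by (simp add: m_assoc)
    also have "\<dots> = (x \<otimes> a) \<otimes> inv a" using c ac xc centerD[OF x(2) ac(1)] by simp
    also have "\<dots> = x" using ac xc by (simp add: m_assoc)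
    finally show "lel a x" using c by (auto simp: leL_def)
  qed
  have sub: "S \<subseteq> {a\<in>P. lel a x}" using lel_trans[OF _ DP x(1) _ Dx] by blast
  have "P \<subseteq> monoid_span G {a\<in>P. lel a x}"
    using monoid_span_mono[OF sub, of G] spanS by simp
  moreover have "monoid_span G {a\<in>P. lel a x} \<subseteq> P" by (rule span_sub) blast
  ultimately have span: "monoid_span G {a\<in>P. lel a x} = P" by blast
  have latR: "is_lattice_on P (leR G P)" using gs by (simp add: garside_structure_def)
  show ?thesis unfolding garside_structure_def
  proof (intro conjI ballI)
    fix a b assume "a \<in> P" "b \<in> P" then show "a \<otimes> b \<in> P" by (rule mulP)
  next
    fix a assume "a \<in> P" then show "lel a x \<longleftrightarrow> leR G P a x" by (rule lr)
  qed (rule PG oneP genP atomicP latL latR x(1) fin_div[OF x(1)] span)+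
qed

lemma trivial_D: assumes "D = \<one>" shows "carrier G = {\<one>}"
proof -
  have "S \<subseteq> {\<one>}" using unitP assms by (auto simp: leL_def)
  then have "monoid_span G S \<subseteq> monoid_span G {\<one>}" by (rule monoid_span_mono)
  moreover have "set xs \<subseteq> {\<one>} \<Longrightarrow> listprod G xs = \<one>" for xs by (induction xs) auto
  ultimately have "P \<subseteq> {\<one>}" using spanS unfolding monoid_span_def by auto
  then have "generate G P \<subseteq> {\<one>}" using generate_subgroup_incl[OF _ triv_subgroup] by blast
  then show ?thesis using genP by auto
qed

lemma dl_one_D: assumes "dl = \<one>" shows "D = \<one>"
  using unitP[OF DP powP[OF DP]] dl_split assms by simp

lemma dl_trivial: "dl = \<one> \<Longrightarrow> carrier G = {\<one>}" using dl_one_D trivial_D by blast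

lemma central_pow_ex: "\<exists>m>0. D [^] (m::nat) \<in> group_center G \<and> (D [^] m = \<one> \<longrightarrow> carrier G = {\<one>})"
  using m0 dl_trivial by blast

lemma comm_consequence:
  assumes hyp: "\<forall>\<Delta>1 \<Delta>2. garside_element G \<Delta>1 \<and> garside_element G \<Delta>2 \<longrightarrow> commensurable G \<Delta>1 \<Delta>2"
    and z: "z \<in> group_center G"
  shows "\<exists>l::int. l \<noteq> 0 \<and> (\<exists>k::int. z [^] l = dl [^] k)"
proof -
  have zc: "z \<in> carrier G" using centerC[OF z] .
  obtain n :: nat where n: "z \<otimes> dl [^] n \<in> P" using rep[OF zc] by blast
  define x2 where "x2 = z \<otimes> dl [^] (Suc n)"
  have x2e: "x2 = (z \<otimes> dl [^] n) \<otimes> dl" unfolding x2_def using zc dl_carrier by (simp add: m_assoc)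
  have x2P: "x2 \<in> P" unfolding x2e using n dl_P by blast
  have x2C: "x2 \<in> group_center G" unfolding x2_def using center_mult[OF z dlpow_center] .
  have "x2 = dl \<otimes> (z \<otimes> dl [^] n)" unfolding x2e using centerD[OF dl_center, of "z \<otimes> dl [^] n"] zc dl_carrier
    by simp
  then have "lel dl x2" using n by (auto intro!: lelI)
  then have Dx2: "lel D x2" using lel_trans[OF DP dl_P x2P D_le_dl] by blast
  have g1: "garside_element G dl" unfolding garside_element_def
    using garside_central[OF dl_P dl_center D_le_dl] by blast
  have g2: "garside_element G x2" unfolding garside_element_def
    using garside_central[OF x2P x2C Dx2] by blast
  obtain k l :: int where kl: "k \<noteq> 0" "l \<noteq> 0" and y: "\<exists>y\<in>carrier G. inv y \<otimes> (dl [^] k) \<otimes> y = x2 [^] l"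
    using hyp g1 g2 unfolding commensurable_def by blast
  then obtain y where yc: "y \<in> carrier G" and ye: "inv y \<otimes> (dl [^] k) \<otimes> y = x2 [^] l" by blast
  have dkc: "dl [^] k \<in> group_center G" using center_int_pow[OF dl_center] .
  have "inv y \<otimes> (dl [^] k) \<otimes> y = dl [^] k"
    using centerD[OF dkc yc] yc dl_carrier by (simp add: m_assoc)
  then have e1: "dl [^] k = x2 [^] l" using ye by simp
  have "x2 [^] l = z [^] l \<otimes> (dl [^] (Suc n)) [^] l"
    unfolding x2_def by (rule int_pow_mult_distrib) (use centerD[OF z] zc dl_carrier in auto)
  also have "(dl [^] (Suc n)) [^] l = dl [^] (int (Suc n) * l)"
    using int_pow_pow[OF dl_carrier, of "int (Suc n)" l] by (simp only: int_pow_int)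
  finally have "dl [^] k = z [^] l \<otimes> dl [^] (int (Suc n) * l)" using e1 by simp
  then have "dl [^] k \<otimes> inv (dl [^] (int (Suc n) * l)) = z [^] l"
    using zc dl_carrier by (simp add: m_assoc)
  then have "z [^] l = dl [^] (k - int (Suc n) * l)" using int_pow_diff[OF dl_carrier] by simp
  then show ?thesis using kl by blast
qed

end


lemma step_ex: "M (t0::int) \<Longrightarrow> \<not> M (t0 + int n) \<Longrightarrow> \<exists>t. M t \<and> \<not> M (t + 1)"
proof (induction n)
  case 0 then show ?case by simp
next
  case (Suc n)
  show ?case
  proof (cases "M (t0 + int n)")
    case True
    then show ?thesis using Suc.prems(2) by (intro exI[of _ "t0 + int n"]) (simp add: algebra_simps)
  next
    case False
    then show ?thesis using Suc.IH Suc.prems(1) by blast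
  qed
qed

context gstr begin

lemma pow_one_pos: assumes x: "x \<in> P" and e: "e > 0" and xe: "x [^] (e::nat) = \<one>" shows "x = \<one>"
proof -
  have "x [^] e = x \<otimes> x [^] (e - 1)" using nat_pow_Suc2[OF PGx[OF x], of "e - 1"] e by simp
  then show ?thesis using unitP[OF x powP[OF x]] xe by simp
qed

lemma dl_int_pos: assumes d: "dl \<noteq> \<one>" and k: "dl [^] (k::int) \<in> P" shows "k \<ge> 0"
proof (rule ccontr)
  assume "\<not> k \<ge> 0"
  then obtain e :: nat where e: "k = - int e" "e > 0" by (metis neg_int_cases not_le of_nat_0_less_iff zero_less_Suc)
  have "dl [^] k = inv (dl [^] e)" using e int_pow_neg_int[OF dl_carrier] by simp
  then have "dl [^] e \<otimes> dl [^] k = \<one>" using dl_carrier by simp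
  then have "dl [^] e = \<one>" using unitP[OF dlpow_P k] by simp
  then show False using pow_one_pos[OF dl_P e(2)] d by simp
qed

lemma dl_intP: "(k::int) \<ge> 0 \<Longrightarrow> dl [^] k \<in> P"
  using pow_nat[of k G dl] dlpow_P by metis

lemma int_powP: "x \<in> P \<Longrightarrow> (k::int) \<ge> 0 \<Longrightarrow> x [^] k \<in> P"
  using pow_nat[of k G x] powP by metis

lemma posneg: assumes z: "z \<in> group_center G" and l: "l > 0" and e: "z [^] (l::int) = dl [^] (k::int)"
  shows "z \<in> P \<or> inv z \<in> P"
proof (cases "k \<ge> 0")
  case True
  have hz: "z [^] (nat l) \<in> P" using pow_nat[of l G z] l e dl_intP[OF True] by simp
  have "z \<in> P" by (rule rootP[OF z _ hz]) (use l in simp)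
  then show ?thesis by simp
next
  case False
  have zc: "z \<in> carrier G" using centerC[OF z] .
  have "(inv z) [^] l = dl [^] (- k)" using int_pow_inv[OF zc] e int_pow_neg[OF dl_carrier] by simp
  then have hz: "(inv z) [^] (nat l) \<in> P" using pow_nat[of l G "inv z"] l dl_intP[of "-k"] False by simp
  have "inv z \<in> P" by (rule rootP[OF center_inv[OF z] _ hz]) (use l in simp)
  then show ?thesis by simp
qed

lemma normH: assumes zc: "z \<in> carrier G" and l: "l \<noteq> 0" and e: "z [^] (l::int) = dl [^] (k::int)"
  shows "\<exists>l' k'. l' > (0::int) \<and> z [^] l' = dl [^] (k'::int)"
proof (cases "l > 0")
  case True then show ?thesis using e by blast
next
  case False
  have "z [^] (- l) = dl [^] (- k)" using e int_pow_neg[OF zc] int_pow_neg[OF dl_carrier] by simp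
  then show ?thesis using False l by (intro exI[of _ "-l"] exI[of _ "-k"]) simp
qed

lemma cyclic_from:
  assumes d: "dl \<noteq> \<one>"
    and H: "\<forall>z\<in>group_center G. \<exists>l::int. l \<noteq> 0 \<and> (\<exists>k::int. z [^] l = dl [^] k)"
  shows "\<exists>\<epsilon>\<in>group_center G. group_center G = range (\<lambda>n::int. \<epsilon> [^] n)"
proof -
  define T where "T = {z. z \<in> group_center G \<and> z \<in> P \<and> z \<noteq> \<one> \<and> lel z dl}"
  define dv where "dv = (\<lambda>z. {a\<in>P. lel a z})"
  have dlT: "dl \<in> T" unfolding T_def using dl_center dl_P d lel_refl[OF dl_P] by simp
  obtain \<epsilon> where eT: "\<epsilon> \<in> T" and emin: "\<And>y. y \<in> T \<Longrightarrow> card (dv \<epsilon>) \<le> card (dv y)"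
    using ex_has_least_nat[of "\<lambda>z. z \<in> T" dl "\<lambda>z. card (dv z)"] dlT by blast
  have eP: "\<epsilon> \<in> P" and eC: "\<epsilon> \<in> group_center G" and e1: "\<epsilon> \<noteq> \<one>" and edl: "lel \<epsilon> dl"
    using eT unfolding T_def by auto
  have ec: "\<epsilon> \<in> carrier G" using PGx[OF eP] .
  have minimal: "y = \<epsilon>" if y: "y \<in> T" "lel y \<epsilon>" for y
  proof (rule ccontr)
    assume ne: "y \<noteq> \<epsilon>"
    have yP: "y \<in> P" using y unfolding T_def by auto
    have "dv y \<subseteq> dv \<epsilon>" unfolding dv_def using lel_trans[OF _ yP eP _ y(2)] by blast
    moreover have "\<epsilon> \<in> dv \<epsilon>" unfolding dv_def using eP lel_refl by simp
    moreover have "\<epsilon> \<notin> dv y" unfolding dv_def using lel_antisym[OF yP eP y(2)] ne by auto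
    ultimately have "dv y \<subset> dv \<epsilon>" by blast
    moreover have "finite (dv \<epsilon>)" unfolding dv_def using fin_div[OF eP] .
    ultimately have "card (dv y) < card (dv \<epsilon>)" by (rule psubset_card_mono[rotated])
    then show False using emin[OF y(1)] by simp
  qed
  obtain a b :: int where a: "a > 0" and ab: "\<epsilon> [^] a = dl [^] b"
    using H eC normH[OF ec] by metis
  have "\<epsilon> [^] a \<in> P" using int_powP[OF eP] a by simp
  then have b0: "b \<ge> 0" using dl_int_pos[OF d] ab by simp
  have b: "b > 0"
  proof (rule ccontr)
    assume "\<not> b > 0"
    then have hz: "\<epsilon> [^] (nat a) = \<one>" using b0 ab pow_nat[of a G \<epsilon>] a by simp
    have "\<epsilon> = \<one>" by (rule pow_one_pos[OF eP _ hz]) (use a in simp)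
    then show False using e1 by simp
  qed
  show ?thesis
  proof (intro bexI[OF _ eC] equalityI subsetI)
    fix x assume "x \<in> range (\<lambda>n::int. \<epsilon> [^] n)"
    then show "x \<in> group_center G" using center_int_pow[OF eC] by auto
  next
    fix z assume z: "z \<in> group_center G"
    have zc: "z \<in> carrier G" using centerC[OF z] .
    obtain l k :: int where l: "l > 0" and lk: "z [^] l = dl [^] k"
      using H z normH[OF zc] by metis
    define xf where "xf = (\<lambda>t::int. inv (\<epsilon> [^] t) \<otimes> z)"
    have xfC: "xf t \<in> group_center G" for t
      unfolding xf_def using center_mult[OF center_inv[OF center_int_pow[OF eC]] z] .
    have xfc: "xf t \<in> carrier G" for t using centerC[OF xfC] .
    have pw: "xf t [^] (l * a) = dl [^] (k * a - b * (t * l))" for t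
    proof -
      have et: "\<epsilon> [^] t \<in> carrier G" using ec by simp
      have "xf t [^] (l * a) = (inv (\<epsilon> [^] t)) [^] (l * a) \<otimes> z [^] (l * a)"
        unfolding xf_def by (rule int_pow_mult_distrib) (use centerD[OF z] et zc in auto)
      also have "(inv (\<epsilon> [^] t)) [^] (l * a) = inv (\<epsilon> [^] (t * (l * a)))"
        using int_pow_inv[OF et] int_pow_pow[OF ec] by simp
      also have "\<epsilon> [^] (t * (l * a)) = dl [^] (b * (t * l))"
      proof -
        have "\<epsilon> [^] (t * (l * a)) = (\<epsilon> [^] a) [^] (t * l)"
          using int_pow_pow[OF ec, of a "t * l"] by (simp add: algebra_simps)
        also have "\<dots> = dl [^] (b * (t * l))" using ab int_pow_pow[OF dl_carrier] by simp
        finally show ?thesis .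
      qed
      also have "z [^] (l * a) = dl [^] (k * a)"
        using int_pow_pow[OF zc, of l a] lk int_pow_pow[OF dl_carrier, of k a] by simp
      also have "inv (dl [^] (b * (t * l))) \<otimes> dl [^] (k * a) = dl [^] (k * a) \<otimes> inv (dl [^] (b * (t * l)))"
        using centerD[OF center_int_pow[OF dl_center], of "inv (dl [^] (b * (t * l)))" "k * a"] dl_carrier
        by simp
      also have "\<dots> = dl [^] (k * a - b * (t * l))" using int_pow_diff[OF dl_carrier] by simp
      finally show ?thesis .
    qed
    have la: "l * a > 0" using l a by simp
    define M where "M = (\<lambda>t. xf t \<in> P)"
    have bound: "t \<le> \<bar>k * a\<bar>" if "M t" for t
    proof -
      have "xf t [^] (l * a) \<in> P" using int_powP[of "xf t" "l * a"] that la unfolding M_def by simp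
      then have "k * a - b * (t * l) \<ge> 0" using pw dl_int_pos[OF d] by metis
      moreover have "l * b \<ge> 1" using l b by (simp add: int_one_le_iff_zero_less)
      ultimately show ?thesis
      proof -
        assume h1: "k * a - b * (t * l) \<ge> 0" and h2: "l * b \<ge> 1"
        show ?thesis
        proof (rule ccontr)
          assume "\<not> t \<le> \<bar>k * a\<bar>"
          then have tt: "t > \<bar>k * a\<bar>" "t \<ge> 0" by auto
          have "t * 1 \<le> t * (l * b)" using mult_left_mono[OF h2 tt(2)] .
          then show False using h1 tt by (simp add: algebra_simps)
        qed
      qed
    qed
    define t0 where "t0 = - \<bar>k * a\<bar>"
    have Mt0: "M t0"
    proof -
      have "l * b \<ge> 1" using l b by (simp add: int_one_le_iff_zero_less)
      then have "\<bar>k * a\<bar> * (l * b) \<ge> \<bar>k * a\<bar>" using mult_left_mono[of 1 "l * b" "\<bar>k * a\<bar>"] by simp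
      then have nn: "k * a - b * (t0 * l) \<ge> 0" unfolding t0_def by (simp add: algebra_simps)
      have hz: "xf t0 [^] (nat (l * a)) \<in> P"
        using pw[of t0] pow_nat[of "l * a" G "xf t0"] la dl_intP[OF nn] by simp
      have "xf t0 \<in> P" by (rule rootP[OF xfC _ hz]) (use la in simp)
      then show ?thesis unfolding M_def .
    qed
    have "\<not> M (t0 + int (nat (\<bar>k * a\<bar> + 1 - t0)))"
      using bound[of "\<bar>k * a\<bar> + 1"] unfolding t0_def by auto
    then obtain t where t: "M t" "\<not> M (t + 1)" using step_ex[of M t0] Mt0 by blast
    define h where "h = xf t"
    have hP: "h \<in> P" using t(1) unfolding M_def h_def .
    have hc: "h \<in> carrier G" unfolding h_def using xfc .
    have "xf (t + 1) \<in> P \<or> inv (xf (t + 1)) \<in> P"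
      using posneg[OF xfC la pw] .
    then have ip: "inv (xf (t + 1)) \<in> P" using t(2) unfolding M_def by blast
    have eq: "inv (xf (t + 1)) = inv h \<otimes> \<epsilon>"
    proof -
      have "inv (xf (t + 1)) = inv z \<otimes> \<epsilon> [^] (t + 1)"
        unfolding xf_def using zc ec by (simp add: inv_mult_group)
      also have "\<epsilon> [^] (t + 1) = \<epsilon> [^] t \<otimes> \<epsilon>" using int_pow_mult[OF ec, of t 1] ec by simp
      also have "inv z \<otimes> (\<epsilon> [^] t \<otimes> \<epsilon>) = inv h \<otimes> \<epsilon>"
        unfolding h_def xf_def using zc ec by (simp add: inv_mult_group m_assoc)
      finally show ?thesis .
    qed
    have "h \<otimes> (inv h \<otimes> \<epsilon>) = \<epsilon>" using hc ec by simp
    then have he: "lel h \<epsilon>" using ip eq by (auto intro!: lelI)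
    have "h = \<one>"
    proof (rule ccontr)
      assume h1: "h \<noteq> \<one>"
      have "lel h dl" using lel_trans[OF hP eP dl_P he edl] .
      then have "h \<in> T" unfolding T_def h_def using xfC hP h1 h_def by simp
      then have "h = \<epsilon>" using minimal he by blast
      then have "inv (xf (t + 1)) = \<one>" using eq ec by simp
      then have "xf (t + 1) = \<one>" using xfc by (metis inv_inv one_closed inv_one)
      then show False using t(2) unfolding M_def by simp
    qed
    then have "inv (\<epsilon> [^] t) \<otimes> z = \<one>" unfolding h_def xf_def .
    then have "z = \<epsilon> [^] t" using zc ec by (metis inv_closed int_pow_closed inv_inv inv_equality)
    then show "z \<in> range (\<lambda>n::int. \<epsilon> [^] n)" by blast
  qed
qed

end


lemma (in group) main_aux:
  assumes ex: "\<exists>P \<Delta>. garside_structure G P \<Delta>"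
  shows "cyclic_group (G\<lparr>carrier := group_center G\<rparr>) \<longleftrightarrow>
    (\<forall>\<Delta>1 \<Delta>2. garside_element G \<Delta>1 \<and> garside_element G \<Delta>2 \<longrightarrow> commensurable G \<Delta>1 \<Delta>2)"
proof -
  have gI: "gstr G P \<Delta>" if "garside_structure G P \<Delta>" for P \<Delta>
    unfolding gstr_def gstr_axioms_def using that is_group by simp
  obtain P0 D0 where gs0: "garside_structure G P0 D0" using ex by blast
  interpret g0: gstr G P0 D0 using gI[OF gs0] .
  show ?thesis unfolding cyclic_center_iff
  proof
    assume "\<exists>x\<in>group_center G. group_center G = range (\<lambda>n::int. x [^] n)"
    then obtain \<epsilon> where eC: "\<epsilon> \<in> group_center G" and eR: "group_center G = range (\<lambda>n::int. \<epsilon> [^] n)"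
      by blast
    have ec: "\<epsilon> \<in> carrier G" using centerC[OF eC] .
    show "\<forall>\<Delta>1 \<Delta>2. garside_element G \<Delta>1 \<and> garside_element G \<Delta>2 \<longrightarrow> commensurable G \<Delta>1 \<Delta>2"
    proof (intro allI impI)
      fix \<Delta>1 \<Delta>2 assume "garside_element G \<Delta>1 \<and> garside_element G \<Delta>2"
      then obtain P1 P2 where g1: "garside_structure G P1 \<Delta>1" and g2: "garside_structure G P2 \<Delta>2"
        unfolding garside_element_def by blast
      interpret a1: gstr G P1 \<Delta>1 using gI[OF g1] .
      interpret a2: gstr G P2 \<Delta>2 using gI[OF g2] .
      obtain m1 :: nat where m1: "m1 > 0" "\<Delta>1 [^] m1 \<in> group_center G" "\<Delta>1 [^] m1 = \<one> \<longrightarrow> carrier G = {\<one>}"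
        using a1.central_pow_ex by blast
      obtain m2 :: nat where m2: "m2 > 0" "\<Delta>2 [^] m2 \<in> group_center G" "\<Delta>2 [^] m2 = \<one> \<longrightarrow> carrier G = {\<one>}"
        using a2.central_pow_ex by blast
      have d1: "\<Delta>1 \<in> carrier G" using a1.D_carrier .
      have d2: "\<Delta>2 \<in> carrier G" using a2.D_carrier .
      show "commensurable G \<Delta>1 \<Delta>2"
      proof (cases "carrier G = {\<one>}")
        case True
        then have "\<Delta>1 = \<one>" "\<Delta>2 = \<one>" using d1 d2 by auto
        then show ?thesis unfolding commensurable_def
          by (intro exI[of _ 1] conjI) (auto intro!: bexI[of _ \<one>])
      next
        case False
        have "\<Delta>1 [^] m1 \<in> range (\<lambda>n::int. \<epsilon> [^] n)" using m1(2) eR by simp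
        then obtain a :: int where a: "\<Delta>1 [^] m1 = \<epsilon> [^] a" by blast
        have "\<Delta>2 [^] m2 \<in> range (\<lambda>n::int. \<epsilon> [^] n)" using m2(2) eR by simp
        then obtain b :: int where b: "\<Delta>2 [^] m2 = \<epsilon> [^] b" by blast
        have a0: "a \<noteq> 0" using a m1(3) False by auto
        have b0: "b \<noteq> 0" using b m2(3) False by auto
        have e1: "\<Delta>1 [^] (int m1 * b) = \<epsilon> [^] (a * b)"
          using int_pow_pow[OF d1, of "int m1" b] a int_pow_pow[OF ec, of a b] by (simp add: int_pow_int)
        have e2: "\<Delta>2 [^] (int m2 * a) = \<epsilon> [^] (a * b)"
          using int_pow_pow[OF d2, of "int m2" a] b int_pow_pow[OF ec, of b a] by (simp add: int_pow_int mult.commute)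
        have "inv \<one> \<otimes> \<Delta>1 [^] (int m1 * b) \<otimes> \<one> = \<Delta>2 [^] (int m2 * a)"
          using e1 e2 d1 ec by simp
        then show ?thesis unfolding commensurable_def using m1(1) m2(1) a0 b0
          by (intro exI[of _ "int m1 * b"] exI[of _ "int m2 * a"] conjI) (auto intro!: bexI[of _ \<one>])
      qed
    qed
  next
    assume hyp: "\<forall>\<Delta>1 \<Delta>2. garside_element G \<Delta>1 \<and> garside_element G \<Delta>2 \<longrightarrow> commensurable G \<Delta>1 \<Delta>2"
    show "\<exists>x\<in>group_center G. group_center G = range (\<lambda>n::int. x [^] n)"
    proof (cases "D0 [^] g0.m0 = \<one>")
      case True
      then have cg: "carrier G = {\<one>}" using g0.dl_trivial by blast
      then have "group_center G = {\<one>}" unfolding group_center_def by auto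
      then show ?thesis by (intro bexI[of _ \<one>]) auto
    next
      case False
      show ?thesis by (rule g0.cyclic_from[OF False]) (use g0.comm_consequence[OF hyp] in blast)
    qed
  qed
qed

theorem mainTheorem1:
  assumes "garside_group G"
  shows "cyclic_group (G\<lparr>carrier := group_center G\<rparr>) \<longleftrightarrow>
    (\<forall>\<Delta>1 \<Delta>2. garside_element G \<Delta>1 \<and> garside_element G \<Delta>2 \<longrightarrow> commensurable G \<Delta>1 \<Delta>2)"
  using assms group.main_aux unfolding garside_group_def by blast

end
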